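(* Let $\Omega$ be a semigroup, $(\mathcal{A},\{\mu^1,\mu^2,\dots\})$ an $A_\infty$-algebra and $\{\mathcal{R}_\alpha:\mathcal{A}\to\mathcal{A}\}_{\alpha\in\Omega}$ a homotopy Rota-Baxter family on $\mathcal{A}$. Then $(\mathcal{A},\{\eta^1,\eta^2,\dots\})$ is a $Dend_\infty$-family algebra, where $\eta^k=(\eta^{k,[1]},\dots,\eta^{k,[k]})$ with $\eta^{k,[r]}_{\alpha_1,\dots,\alpha_k}(a_1,\dots,a_k):=\mu^k\big(\mathcal{R}_{\alpha_1}(a_1),\dots,\mathcal{R}_{\alpha_{r-1}}(a_{r-1}),a_r,\mathcal{R}_{\alpha_{r+1}}(a_{r+1}),\dots,\mathcal{R}_{\alpha_k}(a_k)\big)$ for $[r]\in C_k$, $\alpha_j\in\Omega$, $a_j\in\mathcal{A}$.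
   Context: $\mathbf{k}$ is a commutative unital ring of characteristic $0$; $\Omega$ a semigroup; $\mathcal{A}=\oplus_{i\in\mathbb{Z}}\mathcal{A}^i$ graded. Sign $\pm:=(-1)^{i(n+1)+n(|a_1|+\cdots+|a_{i-1}|)}$. An $A_\infty$-algebra is $\mathcal{A}$ with multilinear maps $\mu^k:\mathcal{A}^{\otimes k}\to\mathcal{A}$ of degree $k-2$, $k\ge1$, with $\sum_{m+n=N+1}\sum_{i=1}^m\pm\,\mu^m(a_1,\dots,a_{i-1},\mu^n(a_i,\dots,a_{i+n-1}),a_{i+n},\dots,a_N)=0$ for all $N\ge1$ and homogeneous $a_j$. A homotopy Rota-Baxter family on it is a collection $\{\mathcal{R}_\alpha\}_{\alpha\in\Omega}$ of degree-$0$ linear maps with $\mu^k(\mathcal{R}_{\alpha_1}(a_1),\dots,\mathcal{R}_{\alpha_k}(a_k))=\sum_{r=1}^k\mathcal{R}_{\alpha_1\cdots\alpha_k}\big(\mu^k(\mathcal{R}_{\alpha_1}(a_1),\dots,a_r,\dots,\mathcal{R}_{\alpha_k}(a_k))\big)$ (the $r$-th argument left without $\mathcal{R}$) for all $k\ge1$, $a_j\in\mathcal{A}$, $\alpha_j\in\Omega$. $C_k=\{[1],\dots,[k]\}$ formal symbols. For $m,n\ge1$, $1\le i\le m$, $1\le r\le m+n-1$: $R_0[r]$ is $[r]$ if $r\le i-1$, $[i]$ if $i\le r\le i+n-1$, $[r-n+1]$ if $r\ge i+n$; $R_i[r]$ is $[r-i+1]$ if $i\le r\le i+n-1$ and $[1]+\cdots+[n]$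 otherwise, with $\eta^{n,[1]+\cdots+[n]}:=\sum_s\eta^{n,[s]}$. A $Dend_\infty$-family algebra is $\mathcal{A}$ with, for each $k\ge1$, $\eta^k=(\eta^{k,[1]},\dots,\eta^{k,[k]})$, each $\eta^{k,[r]}=\{\eta^{k,[r]}_{\alpha_1,\dots,\alpha_k}:\mathcal{A}^{\otimes k}\to\mathcal{A}\}_{\alpha_j\in\Omega}$ multilinear of degree $k-2$ with $\eta^{k,[r]}_{\alpha_1,\dots,\alpha_k}$ independent of $\alpha_r$, satisfying for all $N\ge1$, $[r]\in C_N$, homogeneous $a_j$, $\alpha_j\in\Omega$: $\sum_{m+n=N+1}\sum_{i=1}^m\pm\,\eta^{m,R_0[r]}_{\alpha_1,\dots,\alpha_{i-1},\alpha_i\cdots\alpha_{i+n-1},\alpha_{i+n},\dots,\alpha_N}\big(a_1,\dots,a_{i-1},\eta^{n,R_i[r]}_{\alpha_i,\dots,\alpha_{i+n-1}}(a_i,\dots,a_{i+n-1}),a_{i+n},\dots,a_N\big)=0$. *)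

theory Defs
  imports Main "HOL.Modules"
begin

definition graded_module :: "('k::comm_ring_1 \<Rightarrow> 'v::ab_group_add \<Rightarrow> 'v) \<Rightarrow> (int \<Rightarrow> 'v set) \<Rightarrow> bool" where
  "graded_module smul G \<longleftrightarrow> module smul \<and> (\<forall>i. 0 \<in> G i \<and> (\<forall>x\<in>G i. \<forall>y\<in>G i. x + y \<in> G i) \<and> (\<forall>c. \<forall>x\<in>G i. smul c x \<in> G i)) \<and>
     (\<forall>v. \<exists>!f. finite {i. f i \<noteq> 0} \<and> (\<forall>i. f i \<in> G i) \<and> v = sum f {i. f i \<noteq> 0})"

definition multilinear :: "('k::comm_ring_1 \<Rightarrow> 'v::ab_group_add \<Rightarrow> 'v) \<Rightarrow> nat \<Rightarrow> ('v list \<Rightarrow> 'v) \<Rightarrow> bool" where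
  "multilinear smul k f \<longleftrightarrow> (\<forall>xs j. length xs = k \<longrightarrow> j < k \<longrightarrow> module_hom smul smul (\<lambda>x. f (xs[j := x])))"

definition has_degree :: "(int \<Rightarrow> 'v set) \<Rightarrow> nat \<Rightarrow> ('v list \<Rightarrow> 'v) \<Rightarrow> int \<Rightarrow> bool" where
  "has_degree G k f e \<longleftrightarrow> (\<forall>ds as. length ds = k \<longrightarrow> length as = k \<longrightarrow>
      (\<forall>j<k. as ! j \<in> G (ds ! j)) \<longrightarrow> f as \<in> G (sum_list ds + e))"

definition sgn_act :: "int \<Rightarrow> 'v::ab_group_add \<Rightarrow> 'v" where
  "sgn_act e x = (if even e then x else - x)"

text \<open>The sign (-1)^(i(n+1) + n(|a_1|+...+|a_{i-1}|)), i is 1-based.\<close>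
definition Ainf_sign :: "nat \<Rightarrow> nat \<Rightarrow> int list \<Rightarrow> int" where
  "Ainf_sign i n ds = int i * (int n + 1) + int n * sum_list (take (i - 1) ds)"

text \<open>Insert the inner result: (a_1,...,a_{i-1}, x, a_{i+n},...,a_N) (i 1-based).\<close>
definition ins_block :: "nat \<Rightarrow> nat \<Rightarrow> 'a list \<Rightarrow> 'a \<Rightarrow> 'a list" where
  "ins_block i n xs x = take (i - 1) xs @ [x] @ drop (i - 1 + n) xs"

definition block :: "nat \<Rightarrow> nat \<Rightarrow> 'a list \<Rightarrow> 'a list" where
  "block i n xs = take n (drop (i - 1) xs)"

fun sprod :: "'w::semigroup_mult list \<Rightarrow> 'w" where
  "sprod [] = undefined"
| "sprod [x] = x"
| "sprod (x # y # xs) = x * sprod (y # xs)"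

definition A_infinity :: "('k::comm_ring_1 \<Rightarrow> 'v::ab_group_add \<Rightarrow> 'v) \<Rightarrow> (int \<Rightarrow> 'v set) \<Rightarrow> (nat \<Rightarrow> 'v list \<Rightarrow> 'v) \<Rightarrow> bool" where
  "A_infinity smul G \<mu> \<longleftrightarrow> graded_module smul G \<and>
     (\<forall>k\<ge>1. multilinear smul k (\<mu> k) \<and> has_degree G k (\<mu> k) (int k - 2)) \<and>
     (\<forall>N\<ge>1. \<forall>ds as. length ds = N \<longrightarrow> length as = N \<longrightarrow> (\<forall>j<N. as ! j \<in> G (ds ! j)) \<longrightarrow>
        (\<Sum>m\<in>{1..N}. \<Sum>i\<in>{1..m}. let n = N + 1 - m in
           sgn_act (Ainf_sign i n ds) (\<mu> m (ins_block i n as (\<mu> n (block i n as))))) = 0)"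

definition homotopy_RB_family :: "('k::comm_ring_1 \<Rightarrow> 'v::ab_group_add \<Rightarrow> 'v) \<Rightarrow> (int \<Rightarrow> 'v set) \<Rightarrow> (nat \<Rightarrow> 'v list \<Rightarrow> 'v) \<Rightarrow> ('w::semigroup_mult \<Rightarrow> 'v \<Rightarrow> 'v) \<Rightarrow> bool" where
  "homotopy_RB_family smul G \<mu> R \<longleftrightarrow>
     (\<forall>\<alpha>. module_hom smul smul (R \<alpha>) \<and> (\<forall>d. \<forall>a\<in>G d. R \<alpha> a \<in> G d)) \<and>
     (\<forall>k\<ge>1. \<forall>\<alpha>s as. length \<alpha>s = k \<longrightarrow> length as = k \<longrightarrow>
        \<mu> k (map (\<lambda>j. R (\<alpha>s ! j) (as ! j)) [0..<k]) =
        R (sprod \<alpha>s) (\<Sum>r\<in>{1..k}. \<mu> k (map (\<lambda>j. if j = r - 1 then as ! j else R (\<alpha>s ! j) (as ! j)) [0..<k])))"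

text \<open>The relabelling maps R_0 and R_i; R_i[r] is returned as a set of labels, the set
  {1..n} standing for [1]+...+[n].\<close>
definition R0_lab :: "nat \<Rightarrow> nat \<Rightarrow> nat \<Rightarrow> nat" where
  "R0_lab i n r = (if r \<le> i - 1 then r else if r \<le> i + n - 1 then i else r - n + 1)"

definition Ri_lab :: "nat \<Rightarrow> nat \<Rightarrow> nat \<Rightarrow> nat set" where
  "Ri_lab i n r = (if i \<le> r \<and> r \<le> i + n - 1 then {r - i + 1} else {1..n})"

text \<open>eta k r alphas as = eta^{k,[r]}_{alpha_1..alpha_k}(a_1..a_k), r 1-based.\<close>
definition Dend_inf_family :: "('k::comm_ring_1 \<Rightarrow> 'v::ab_group_add \<Rightarrow> 'v) \<Rightarrow> (int \<Rightarrow> 'v set) \<Rightarrow> (nat \<Rightarrow> nat \<Rightarrow> 'w::semigroup_mult list \<Rightarrow> 'v list \<Rightarrow> 'v) \<Rightarrow> bool" where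
  "Dend_inf_family smul G \<eta> \<longleftrightarrow> graded_module smul G \<and>
     (\<forall>k\<ge>1. \<forall>r\<in>{1..k}. \<forall>\<alpha>s. length \<alpha>s = k \<longrightarrow>
        multilinear smul k (\<eta> k r \<alpha>s) \<and> has_degree G k (\<eta> k r \<alpha>s) (int k - 2) \<and>
        (\<forall>\<beta>. \<eta> k r (\<alpha>s[r - 1 := \<beta>]) = \<eta> k r \<alpha>s)) \<and>
     (\<forall>N\<ge>1. \<forall>r\<in>{1..N}. \<forall>ds as \<alpha>s. length ds = N \<longrightarrow> length as = N \<longrightarrow> length \<alpha>s = N \<longrightarrow>
        (\<forall>j<N. as ! j \<in> G (ds ! j)) \<longrightarrow>
        (\<Sum>m\<in>{1..N}. \<Sum>i\<in>{1..m}. let n = N + 1 - m in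
           sgn_act (Ainf_sign i n ds)
             (\<eta> m (R0_lab i n r) (ins_block i n \<alpha>s (sprod (block i n \<alpha>s)))
                (ins_block i n as (\<Sum>s\<in>Ri_lab i n r. \<eta> n s (block i n \<alpha>s) (block i n as))))) = 0)"

end

theory Submission imports Defs begin

lemma len_block: "i - 1 + n \<le> length xs \<Longrightarrow> length (block i n xs) = n"
  by (simp add: block_def)
lemma nth_block: "i - 1 + n \<le> length xs \<Longrightarrow> j < n \<Longrightarrow> block i n xs ! j = xs ! (i - 1 + j)"
  by (simp add: block_def)
lemma len_ins: "i - 1 + n \<le> length xs \<Longrightarrow> length (ins_block i n xs x) = length xs + 1 - n"
  by (simp add: ins_block_def)
lemma nth_ins: "i - 1 + n \<le> length xs \<Longrightarrow> j < length xs + 1 - n \<Longrightarrow>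
  ins_block i n xs x ! j = (if j < i - 1 then xs ! j else if j = i - 1 then x else xs ! (j + n - 1))"
  by (auto simp add: ins_block_def nth_append min_def add.commute)

lemma term_eq:
  fixes \<mu> :: "nat \<Rightarrow> 'v::ab_group_add list \<Rightarrow> 'v" and R :: "'w::semigroup_mult \<Rightarrow> 'v \<Rightarrow> 'v"
  assumes RB: "\<forall>k\<ge>1. \<forall>\<alpha>s as. length \<alpha>s = k \<longrightarrow> length as = k \<longrightarrow>
        \<mu> k (map (\<lambda>j. R (\<alpha>s ! j) (as ! j)) [0..<k]) =
        R (sprod \<alpha>s) (\<Sum>r\<in>{1..k}. \<mu> k (map (\<lambda>j. if j = r - 1 then as ! j else R (\<alpha>s ! j) (as ! j)) [0..<k]))"
    and E: "E = (\<lambda>k r \<alpha>s as. \<mu> k (map (\<lambda>j. if j = r - 1 then as ! j else R (\<alpha>s ! j) (as ! j)) [0..<k]))"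
    and bs: "bs = map (\<lambda>j. if j = r - 1 then as ! j else R (\<alpha>s ! j) (as ! j)) [0..<N]"
    and m: "1 \<le> m" "m \<le> N" and i: "1 \<le> i" "i \<le> m" and n: "n = N + 1 - m"
    and r: "1 \<le> r" "r \<le> N" and len: "length as = N" "length \<alpha>s = N"
  shows "E m (R0_lab i n r) (ins_block i n \<alpha>s (sprod (block i n \<alpha>s)))
      (ins_block i n as (\<Sum>s\<in>Ri_lab i n r. E n s (block i n \<alpha>s) (block i n as)))
    = \<mu> m (ins_block i n bs (\<mu> n (block i n bs)))"
proof -
  have lb: "length bs = N" using bs by simp
  have ib: "i - 1 + n \<le> N" using m i n by simp
  have mn: "m = N + 1 - n" using m n by simp
  show ?thesis
  proof (cases "i \<le> r \<and> r \<le> i + n - 1")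
    case True
    have Ri: "Ri_lab i n r = {r - i + 1}" using True by (simp add: Ri_lab_def)
    have R0: "R0_lab i n r = i" using True i by (auto simp add: R0_lab_def)
    have bl: "block i n bs = map (\<lambda>j. if j = r - i + 1 - 1 then block i n as ! j else R (block i n \<alpha>s ! j) (block i n as ! j)) [0..<n]"
      by (rule nth_equalityI) (use ib lb len True i in \<open>auto simp: len_block nth_block bs\<close>)
    show ?thesis
      unfolding Ri R0 E bl
      by (rule arg_cong[where f="\<mu> m"], rule nth_equalityI)
         (use ib lb len True i m n in \<open>auto simp: len_ins nth_ins bs\<close>)
  next
    case False
    have Ri: "Ri_lab i n r = {1..n}" using False by (auto simp add: Ri_lab_def)
    have bl: "block i n bs = map (\<lambda>j. R (block i n \<alpha>s ! j) (block i n as ! j)) [0..<n]"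
    proof (rule nth_equalityI)
      show "length (block i n bs) = length (map (\<lambda>j. R (block i n \<alpha>s ! j) (block i n as ! j)) [0..<n])"
        using ib lb by (simp add: len_block)
      fix j assume "j < length (block i n bs)"
      then have j: "j < n" using ib lb by (simp add: len_block)
      have ne: "i - 1 + j \<noteq> r - 1" using False j i r by linarith
      have lt: "i - 1 + j < N" using ib j by linarith
      show "block i n bs ! j = map (\<lambda>j. R (block i n \<alpha>s ! j) (block i n as ! j)) [0..<n] ! j"
      proof -
        have "block i n bs ! j = bs ! (i - 1 + j)" using nth_block[OF ib[folded lb] j] .
        also have "\<dots> = R (\<alpha>s ! (i - 1 + j)) (as ! (i - 1 + j))"
          unfolding bs using lt ne by (simp del: upt.simps)
        also have "\<dots> = R (block i n \<alpha>s ! j) (block i n as ! j)"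
          using nth_block[OF ib[folded len(2)] j] nth_block[OF ib[folded len(1)] j] by simp
        finally show ?thesis using j by simp
      qed
    qed
    have n1: "n \<ge> 1" using n m by simp
    have rb: "\<mu> n (block i n bs) = R (sprod (block i n \<alpha>s)) (\<Sum>s\<in>{1..n}. E n s (block i n \<alpha>s) (block i n as))"
      unfolding bl E using RB n1 ib len by (simp add: len_block)
    define c where "c = R0_lab i n r"
    define S where "S = sprod (block i n \<alpha>s)"
    define Y where "Y = (\<Sum>s\<in>{1..n}. E n s (block i n \<alpha>s) (block i n as))"
    have cne: "c - 1 \<noteq> i - 1" using False i r unfolding c_def R0_lab_def by (auto split: if_splits)
    have c1: "j < i - 1 \<Longrightarrow> (j = c - 1) = (j = r - 1)" for j
      using False i r unfolding c_def R0_lab_def by (auto split: if_splits)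
    have c2: "j > i - 1 \<Longrightarrow> j < m \<Longrightarrow> (j = c - 1) = (j + n - 1 = r - 1)" for j
      using False i r m n unfolding c_def R0_lab_def by (auto split: if_splits)
    have "map (\<lambda>j. if j = c - 1 then ins_block i n as Y ! j else R (ins_block i n \<alpha>s S ! j) (ins_block i n as Y ! j)) [0..<m]
       = ins_block i n bs (R S Y)"
    proof (rule nth_equalityI)
      show "length (map (\<lambda>j. if j = c - 1 then ins_block i n as Y ! j else R (ins_block i n \<alpha>s S ! j) (ins_block i n as Y ! j)) [0..<m]) = length (ins_block i n bs (R S Y))"
        using len_ins[OF ib[folded lb]] mn lb by simp
      fix j assume "j < length (map (\<lambda>j. if j = c - 1 then ins_block i n as Y ! j else R (ins_block i n \<alpha>s S ! j) (ins_block i n as Y ! j)) [0..<m])"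
      then have j: "j < m" by simp
      have jN: "j < N + 1 - n" using j mn by simp
      note i1 = nth_ins[OF ib[folded lb] jN[folded lb]]
      note i2 = nth_ins[OF ib[folded len(1)] jN[folded len(1)]]
      note i3 = nth_ins[OF ib[folded len(2)] jN[folded len(2)]]
      have lhs: "map (\<lambda>j. if j = c - 1 then ins_block i n as Y ! j else R (ins_block i n \<alpha>s S ! j) (ins_block i n as Y ! j)) [0..<m] ! j
        = (if j = c - 1 then ins_block i n as Y ! j else R (ins_block i n \<alpha>s S ! j) (ins_block i n as Y ! j))"
        using j by simp
      show "map (\<lambda>j. if j = c - 1 then ins_block i n as Y ! j else R (ins_block i n \<alpha>s S ! j) (ins_block i n as Y ! j)) [0..<m] ! j = ins_block i n bs (R S Y) ! j"
      proof (cases "j < i - 1")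
        case True
        have "j < N" using True ib by linarith
        then have "bs ! j = (if j = r - 1 then as ! j else R (\<alpha>s ! j) (as ! j))" unfolding bs by simp
        then show ?thesis unfolding lhs i1 i2 i3 using True c1[OF True] by simp
      next
        case F2: False
        show ?thesis
        proof (cases "j = i - 1")
          case True
          then show ?thesis unfolding lhs i1 i2 i3 using cne by simp
        next
          case False
          then have gt: "j > i - 1" using F2 by simp
          have "j + n - 1 < N" using j mn n m by linarith
          then have "bs ! (j + n - 1) = (if j + n - 1 = r - 1 then as ! (j + n - 1) else R (\<alpha>s ! (j + n - 1)) (as ! (j + n - 1)))" unfolding bs by simp
          then show ?thesis unfolding lhs i1 i2 i3 using F2 False c2[OF gt j] by simp
        qed
      qed
    qed
    then show ?thesis
      unfolding Ri rb E c_def S_def Y_def by simp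
  qed
qed

theorem theorem5p13:
  fixes smul :: "'k::{comm_ring_1, ring_char_0} \<Rightarrow> 'v::ab_group_add \<Rightarrow> 'v"
    and G :: "int \<Rightarrow> 'v set"
    and \<mu> :: "nat \<Rightarrow> 'v list \<Rightarrow> 'v"
    and R :: "'w::semigroup_mult \<Rightarrow> 'v \<Rightarrow> 'v"
  assumes "A_infinity smul G \<mu>"
    and "homotopy_RB_family smul G \<mu> R"
  shows "Dend_inf_family smul G
           (\<lambda>k r \<alpha>s as. \<mu> k (map (\<lambda>j. if j = r - 1 then as ! j else R (\<alpha>s ! j) (as ! j)) [0..<k]))"
proof -
  define E where "E = (\<lambda>k r \<alpha>s as. \<mu> k (map (\<lambda>j. if j = r - 1 then as ! j else R (\<alpha>s ! j) (as ! j)) [0..<k]))"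
  have GM: "graded_module smul G" and muk: "\<And>k. k \<ge> 1 \<Longrightarrow> multilinear smul k (\<mu> k) \<and> has_degree G k (\<mu> k) (int k - 2)"
    and AI: "\<forall>N\<ge>1. \<forall>ds as. length ds = N \<longrightarrow> length as = N \<longrightarrow> (\<forall>j<N. as ! j \<in> G (ds ! j)) \<longrightarrow>
        (\<Sum>m\<in>{1..N}. \<Sum>i\<in>{1..m}. let n = N + 1 - m in
           sgn_act (Ainf_sign i n ds) (\<mu> m (ins_block i n as (\<mu> n (block i n as))))) = 0"
    using assms(1) unfolding A_infinity_def by auto
  have Rh: "\<And>\<alpha>. module_hom smul smul (R \<alpha>)" and RG: "\<And>\<alpha> d a. a \<in> G d \<Longrightarrow> R \<alpha> a \<in> G d"
    and RB: "\<forall>k\<ge>1. \<forall>\<alpha>s as. length \<alpha>s = k \<longrightarrow> length as = k \<longrightarrow>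
        \<mu> k (map (\<lambda>j. R (\<alpha>s ! j) (as ! j)) [0..<k]) =
        R (sprod \<alpha>s) (\<Sum>r\<in>{1..k}. \<mu> k (map (\<lambda>j. if j = r - 1 then as ! j else R (\<alpha>s ! j) (as ! j)) [0..<k]))"
    using assms(2) unfolding homotopy_RB_family_def by auto
  have modl: "module smul" using GM unfolding graded_module_def by auto
  have part2: "multilinear smul k (E k r \<alpha>s) \<and> has_degree G k (E k r \<alpha>s) (int k - 2) \<and>
        (\<forall>\<beta>. E k r (\<alpha>s[r - 1 := \<beta>]) = E k r \<alpha>s)"
    if k: "k \<ge> 1" and lk: "length \<alpha>s = k" for k r \<alpha>s
  proof (intro conjI allI)
    show "multilinear smul k (E k r \<alpha>s)"
      unfolding multilinear_def
    proof (intro allI impI)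
      fix xs :: "'v list" and j assume lx: "length xs = k" and j: "j < k"
      define g where "g = map (\<lambda>l. if l = r - 1 then xs ! l else R (\<alpha>s ! l) (xs ! l)) [0..<k]"
      define f where "f = (if j = r - 1 then (\<lambda>x. x) else R (\<alpha>s ! j))"
      have eq: "map (\<lambda>l. if l = r - 1 then xs[j := x] ! l else R (\<alpha>s ! l) (xs[j := x] ! l)) [0..<k] = g[j := f x]" for x
        by (rule nth_equalityI) (use lx j in \<open>auto simp: g_def f_def nth_list_update\<close>)
      have fh: "module_hom smul smul f" unfolding f_def using Rh module.module_hom_ident[OF modl] by simp
      have gh: "module_hom smul smul (\<lambda>y. \<mu> k (g[j := y]))"
        using muk[OF k] j unfolding multilinear_def g_def by simp
      have "module_hom smul smul ((\<lambda>y. \<mu> k (g[j := y])) \<circ> f)"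
        by (rule module_hom_compose[OF fh gh])
      then show "module_hom smul smul (\<lambda>x. E k r \<alpha>s (xs[j := x]))"
        unfolding E_def eq by (simp add: comp_def)
    qed
    show "has_degree G k (E k r \<alpha>s) (int k - 2)"
      unfolding has_degree_def
    proof (intro allI impI)
      fix ds and as :: "'v list"
      assume "length ds = k" "length as = k" and h: "\<forall>j<k. as ! j \<in> G (ds ! j)"
      then show "E k r \<alpha>s as \<in> G (sum_list ds + (int k - 2))"
        using muk[OF k] h RG unfolding has_degree_def E_def by simp
    qed
    fix \<beta>
    show "E k r (\<alpha>s[r - 1 := \<beta>]) = E k r \<alpha>s"
      unfolding E_def by (rule ext, rule arg_cong[where f="\<mu> k"]) (auto simp: nth_list_update)
  qed
  have part3: "(\<Sum>m\<in>{1..N}. \<Sum>i\<in>{1..m}. let n = N + 1 - m in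
           sgn_act (Ainf_sign i n ds)
             (E m (R0_lab i n r) (ins_block i n \<alpha>s (sprod (block i n \<alpha>s)))
                (ins_block i n as (\<Sum>s\<in>Ri_lab i n r. E n s (block i n \<alpha>s) (block i n as))))) = 0"
    if N: "N \<ge> 1" and r: "r \<in> {1..N}" and ld: "length ds = N" and la: "length as = N" and lal: "length \<alpha>s = N"
      and h: "\<forall>j<N. as ! j \<in> G (ds ! j)" for N r ds as \<alpha>s
  proof -
    define bs where "bs = map (\<lambda>j. if j = r - 1 then as ! j else R (\<alpha>s ! j) (as ! j)) [0..<N]"
    have lb: "length bs = N" unfolding bs_def by simp
    have hb: "\<forall>j<N. bs ! j \<in> G (ds ! j)" unfolding bs_def using h RG by simp
    have "(\<Sum>m\<in>{1..N}. \<Sum>i\<in>{1..m}. let n = N + 1 - m in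
           sgn_act (Ainf_sign i n ds)
             (E m (R0_lab i n r) (ins_block i n \<alpha>s (sprod (block i n \<alpha>s)))
                (ins_block i n as (\<Sum>s\<in>Ri_lab i n r. E n s (block i n \<alpha>s) (block i n as)))))
        = (\<Sum>m\<in>{1..N}. \<Sum>i\<in>{1..m}. let n = N + 1 - m in
           sgn_act (Ainf_sign i n ds) (\<mu> m (ins_block i n bs (\<mu> n (block i n bs)))))"
    proof (intro sum.cong refl)
      fix m i assume m: "m \<in> {1..N}" and i: "i \<in> {1..m}"
      show "(let n = N + 1 - m in
           sgn_act (Ainf_sign i n ds)
             (E m (R0_lab i n r) (ins_block i n \<alpha>s (sprod (block i n \<alpha>s)))
                (ins_block i n as (\<Sum>s\<in>Ri_lab i n r. E n s (block i n \<alpha>s) (block i n as)))))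
        = (let n = N + 1 - m in
           sgn_act (Ainf_sign i n ds) (\<mu> m (ins_block i n bs (\<mu> n (block i n bs)))))"
        unfolding Let_def
        using term_eq[OF RB E_def bs_def _ _ _ _ refl _ _ la lal] m i r by simp
    qed
    also have "\<dots> = 0" using AI N ld lb hb by blast
    finally show ?thesis .
  qed
  show ?thesis
    unfolding Dend_inf_family_def E_def[symmetric]
    using GM part2 part3 by auto
qed

end
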